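(* Let $\rho,\varepsilon,\nu,\omega,\mu:[0,1]\to\mathbb{R}$ be smooth functions with $\rho,\omega>0$, $\nu\ge 0$, $\mu\ge 0$, $\varepsilon(s)>0$ for all $s\in[0,1]$, and $\mu(1)=\mu_s(1)=0$. Let $u\in C^2([0,1])$ with $u(s)\in[-1,1]$ for all $s$. Consider the stationary problem, in the unknowns $q:[0,1]\to\mathbb{R}^2$ and $\sigma:[0,1]\to\mathbb{R}$, $$ \begin{cases} \left(\sigma q_s-H q_{ss}^\perp\right)_s -\left(G q_{ss}+H q_{s}^\perp\right)_{ss}=0 & \text{in }(0,1),\\ |q_s|^2=1 & \text{in }(0,1),\\ q(0)=0,\quad q_s(0)=-e_2,\\ q_{ss}(1)=0,\quad q_{sss}(1)=0,\quad \sigma(1)=0, \end{cases} $$ where $G(s)=\varepsilon(s)+\nu(s)\big(|q_{ss}(s)|^2-\omega^2(s)\big)_+$ and $H(s)=\mu(s)\big(\omega(s)u(s)-q_s(s)\times q_{ss}(s)\big)$. Then this problem admits a unique solution $(q,\sigma)\in C^4([0,1])\times C^1([0,1])$, given for $s\in[0,1]$ by $$ q(s)=\int_0^s\big(\sin(\theta(\xi)),-\cos(\theta(\xi))\big)\,d\xi,\qquad \sigma(s)=\varepsilon(s)\big(\bar\omega(s)u(s)\big)^2, $$ where $$ \theta(\xi)=\int_0^\xi\bar\omega(z)u(z)\,dz,\qquad \bar\omega(s)=\frac{\mu(s)\omega(s)}{\mu(s)+\varepsilon(s)}. $$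
   Context: Notation: $e_2=(0,1)$. For $v\in\mathbb{R}^2$, $v^\perp=\begin{pmatrix}0&1\\-1&0\end{pmatrix}v$. For $v,w\in\mathbb{R}^2$, $v\times w:=v\cdot w^\perp$ (a scalar). $(x)_+=\max\{x,0\}$. Subscripts $s$ denote derivatives with respect to $s$. *)

theory Defs
  imports "HOL-Analysis.Analysis"
begin

definition e2 :: "real \<times> real" where "e2 = (0, 1)"

definition perp :: "real \<times> real \<Rightarrow> real \<times> real" where
  "perp v = (snd v, - fst v)"

definition cross :: "real \<times> real \<Rightarrow> real \<times> real \<Rightarrow> real" where
  "cross v w = v \<bullet> perp w"

definition pos_part :: "real \<Rightarrow> real" where "pos_part x = max x 0"

definition Ck_on01 :: "nat \<Rightarrow> (real \<Rightarrow> 'a::real_normed_vector) \<Rightarrow> (nat \<Rightarrow> real \<Rightarrow> 'a) \<Rightarrow> bool" where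
  "Ck_on01 k f D \<longleftrightarrow> D 0 = f \<and>
     (\<forall>j<k. \<forall>x\<in>{0..1}. (D j has_vector_derivative D (Suc j) x) (at x within {0..1})) \<and>
     continuous_on {0..1} (D k)"

definition smooth01 :: "(real \<Rightarrow> real) \<Rightarrow> bool" where
  "smooth01 f \<longleftrightarrow> (\<exists>D. D 0 = f \<and>
     (\<forall>j. \<forall>x\<in>{0..1}. (D j has_real_derivative D (Suc j) x) (at x within {0..1})))"

definition stationary_solution ::
  "(real \<Rightarrow> real) \<Rightarrow> (real \<Rightarrow> real) \<Rightarrow> (real \<Rightarrow> real) \<Rightarrow> (real \<Rightarrow> real) \<Rightarrow> (real \<Rightarrow> real)
   \<Rightarrow> (real \<Rightarrow> real \<times> real) \<Rightarrow> (real \<Rightarrow> real) \<Rightarrow> bool" where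
  "stationary_solution \<epsilon> \<nu> \<omega> \<mu> u q \<sigma> \<longleftrightarrow>
    (\<exists>Q S. Ck_on01 4 q Q \<and> Ck_on01 1 \<sigma> S \<and>
      (let G = (\<lambda>s. \<epsilon> s + \<nu> s * pos_part ((norm (Q 2 s))\<^sup>2 - (\<omega> s)\<^sup>2));
           H = (\<lambda>s. \<mu> s * (\<omega> s * u s - cross (Q 1 s) (Q 2 s)));
           A = (\<lambda>s. \<sigma> s *\<^sub>R Q 1 s - H s *\<^sub>R perp (Q 2 s));
           B = (\<lambda>s. G s *\<^sub>R Q 2 s + H s *\<^sub>R perp (Q 1 s))
       in \<exists>A' B' B''. \<forall>x\<in>{0<..<1}.
            (A has_vector_derivative A' x) (at x) \<and>
            (B has_vector_derivative B' x) (at x) \<and>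
            (B' has_vector_derivative B'' x) (at x) \<and>
            A' x - B'' x = 0) \<and>
      (\<forall>s\<in>{0<..<1}. (norm (Q 1 s))\<^sup>2 = 1) \<and>
      q 0 = 0 \<and> Q 1 0 = - e2 \<and>
      Q 2 1 = 0 \<and> Q 3 1 = 0 \<and> \<sigma> 1 = 0)"

definition omega_bar :: "(real \<Rightarrow> real) \<Rightarrow> (real \<Rightarrow> real) \<Rightarrow> (real \<Rightarrow> real) \<Rightarrow> real \<Rightarrow> real" where
  "omega_bar \<epsilon> \<omega> \<mu> s = \<mu> s * \<omega> s / (\<mu> s + \<epsilon> s)"

definition theta_expl :: "(real \<Rightarrow> real) \<Rightarrow> (real \<Rightarrow> real) \<Rightarrow> (real \<Rightarrow> real) \<Rightarrow> (real \<Rightarrow> real) \<Rightarrow> real \<Rightarrow> real" where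
  "theta_expl \<epsilon> \<omega> \<mu> u \<xi> = integral {0..\<xi>} (\<lambda>z. omega_bar \<epsilon> \<omega> \<mu> z * u z)"

definition q_expl :: "(real \<Rightarrow> real) \<Rightarrow> (real \<Rightarrow> real) \<Rightarrow> (real \<Rightarrow> real) \<Rightarrow> (real \<Rightarrow> real) \<Rightarrow> real \<Rightarrow> real \<times> real" where
  "q_expl \<epsilon> \<omega> \<mu> u s =
     integral {0..s} (\<lambda>\<xi>. (sin (theta_expl \<epsilon> \<omega> \<mu> u \<xi>), - cos (theta_expl \<epsilon> \<omega> \<mu> u \<xi>)))"

definition sigma_expl :: "(real \<Rightarrow> real) \<Rightarrow> (real \<Rightarrow> real) \<Rightarrow> (real \<Rightarrow> real) \<Rightarrow> (real \<Rightarrow> real) \<Rightarrow> real \<Rightarrow> real" where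
  "sigma_expl \<epsilon> \<omega> \<mu> u s = \<epsilon> s * (omega_bar \<epsilon> \<omega> \<mu> s * u s)\<^sup>2"

end

theory Submission
  imports Defs
begin


definition c2_01 :: "(real \<Rightarrow> real) \<Rightarrow> (real \<Rightarrow> real) \<Rightarrow> (real \<Rightarrow> real) \<Rightarrow> bool" where
  "c2_01 f f1 f2 \<longleftrightarrow> (\<forall>x\<in>{0..1}. (f has_real_derivative f1 x) (at x within {0..1}) \<and>
      (f1 has_real_derivative f2 x) (at x within {0..1})) \<and> continuous_on {0..1} f2"

lemma vd_cont:
  assumes "\<And>x. x\<in>{0..1::real} \<Longrightarrow> (f has_vector_derivative f' x) (at x within {0..1})"
  shows "continuous_on {0..1} f"
  using assms continuous_on_eq_continuous_within has_vector_derivative_continuous by blast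

lemma rd_cont:
  assumes "\<And>x. x\<in>{0..1::real} \<Longrightarrow> (f has_real_derivative f' x) (at x within {0..1})"
  shows "continuous_on {0..1} f"
  using assms continuous_on_eq_continuous_within has_real_derivative_iff_has_vector_derivative has_vector_derivative_continuous by blast

lemma c2_cont: assumes "c2_01 f f1 f2" shows "continuous_on {0..1} f" "continuous_on {0..1} f1" "continuous_on {0..1} f2"
  using assms unfolding c2_01_def by (auto intro!: rd_cont)

lemma c2_add: assumes "c2_01 f f1 f2" "c2_01 g g1 g2"
  shows "c2_01 (\<lambda>x. f x + g x) (\<lambda>x. f1 x + g1 x) (\<lambda>x. f2 x + g2 x)"
  using assms unfolding c2_01_def by (auto intro!: derivative_eq_intros continuous_intros)

lemma c2_mult: assumes "c2_01 f f1 f2" "c2_01 g g1 g2"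
  shows "c2_01 (\<lambda>x. f x * g x) (\<lambda>x. f1 x * g x + f x * g1 x) (\<lambda>x. f2 x * g x + 2 * f1 x * g1 x + f x * g2 x)"
proof -
  have c: "continuous_on {0..1} f" "continuous_on {0..1} f1" "continuous_on {0..1} g" "continuous_on {0..1} g1"
    using c2_cont assms by blast+
  show ?thesis
  using assms c unfolding c2_01_def by (auto intro!: derivative_eq_intros continuous_intros simp: algebra_simps)
qed

lemma c2_inverse: assumes "c2_01 g g1 g2" "\<And>x. x\<in>{0..1} \<Longrightarrow> g x \<noteq> 0"
  shows "c2_01 (\<lambda>x. inverse (g x)) (\<lambda>x. - g1 x / (g x)^2) (\<lambda>x. - g2 x / (g x)^2 + 2 * (g1 x)^2 / (g x)^3)"
proof -
  have c: "continuous_on {0..1} g" "continuous_on {0..1} g1" "continuous_on {0..1} g2"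
    using c2_cont assms by blast+
  show ?thesis
    unfolding c2_01_def
  proof (intro conjI ballI)
    fix x :: real assume x: "x \<in> {0..1}"
    have d: "(g has_real_derivative g1 x) (at x within {0..1})" "(g1 has_real_derivative g2 x) (at x within {0..1})"
      using assms(1) x unfolding c2_01_def by auto
    show "((\<lambda>x. inverse (g x)) has_real_derivative - g1 x / (g x)^2) (at x within {0..1})"
      using d assms(2)[OF x] by (auto intro!: derivative_eq_intros simp: field_simps power2_eq_square)
    show "((\<lambda>x. - g1 x / (g x)^2) has_real_derivative - g2 x / (g x)^2 + 2 * (g1 x)^2 / (g x)^3) (at x within {0..1})"
      using d assms(2)[OF x] by (auto intro!: derivative_eq_intros simp: field_simps power2_eq_square power3_eq_cube)
  next
    show "continuous_on {0..1} (\<lambda>x. - g2 x / (g x)^2 + 2 * (g1 x)^2 / (g x)^3)"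
      using c assms(2) by (auto intro!: continuous_intros)
  qed
qed

lemma c2_smooth: assumes "smooth01 f" obtains f1 f2 where "c2_01 f f1 f2"
proof -
  obtain D where D: "D 0 = f" "\<And>j x. x\<in>{0..1} \<Longrightarrow> (D j has_real_derivative D (Suc j) x) (at x within {0..1})"
    using assms unfolding smooth01_def by blast
  have "continuous_on {0..1} (D 2)" using D(2)[of _ 2] by (intro rd_cont) (auto simp: numeral_3_eq_3 numeral_2_eq_2)
  then have "c2_01 f (D 1) (D 2)" unfolding c2_01_def
    using D by (auto simp: numeral_2_eq_2)
  then show ?thesis using that by blast
qed

lemma c2_Ck: assumes "Ck_on01 2 (u::real\<Rightarrow>real) D" shows "c2_01 u (D 1) (D 2)"
  using assms unfolding Ck_on01_def c2_01_def has_real_derivative_iff_has_vector_derivative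
  by (metis One_nat_def lessI numeral_2_eq_2 zero_less_Suc)



lemma vd_pair:
  assumes "(f has_real_derivative a) (at x within s)" "(g has_real_derivative b) (at x within s)"
  shows "((\<lambda>x. (f x, g x)) has_vector_derivative (a, b)) (at x within s)"
proof -
  have "((\<lambda>x. (f x, g x)) has_derivative (\<lambda>h. (a * h, b * h))) (at x within s)"
    using assms unfolding has_field_derivative_def
    by (rule has_derivative_Pair)
  then show ?thesis unfolding has_vector_derivative_def by (simp add: scaleR_prod_def mult.commute)
qed

lemma deriv0_mult:
  fixes g :: "real \<Rightarrow> 'a::real_normed_vector"
  assumes "(k has_real_derivative 0) (at x within S)" "k x = 0" "continuous (at x within S) g"
  shows "((\<lambda>y. k y *\<^sub>R g y) has_vector_derivative 0) (at x within S)"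
proof -
  have kk: "((\<lambda>y. (1 / norm(y - x)) *\<^sub>R (k y - (k x + (y - x) * 0))) \<longlongrightarrow> 0) (at x within S)"
    using assms(1) unfolding has_field_derivative_def has_derivative_within by (simp add: mult.commute)
  have gg: "(g \<longlongrightarrow> g x) (at x within S)" using assms(3) by (simp add: continuous_within)
  have "((\<lambda>y. ((1 / norm(y - x)) *\<^sub>R (k y - (k x + (y - x) * 0))) *\<^sub>R g y) \<longlongrightarrow> 0 *\<^sub>R g x) (at x within S)"
    by (intro tendsto_scaleR kk gg)
  moreover have eq: "\<And>y. ((1 / norm(y - x)) *\<^sub>R (k y - (k x + (y - x) * 0))) *\<^sub>R g y =
     (1 / norm(y - x)) *\<^sub>R (k y *\<^sub>R g y - (k x *\<^sub>R g x + (y - x) *\<^sub>R 0))"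
    using assms(2) by simp
  ultimately have "((\<lambda>y. (1 / norm(y - x)) *\<^sub>R (k y *\<^sub>R g y - (k x *\<^sub>R g x + (y - x) *\<^sub>R 0))) \<longlongrightarrow> 0) (at x within S)"
    by (simp only: eq scaleR_zero_left)
  then show ?thesis unfolding has_vector_derivative_def has_derivative_within
    by (blast intro: bounded_linear_scaleR_left)
qed

lemma const01:
  fixes f :: "real \<Rightarrow> 'a::banach"
  assumes "continuous_on {0..1} f" "\<And>x. x\<in>{0<..<1} \<Longrightarrow> (f has_vector_derivative 0) (at x)" "s\<in>{0..1}"
  shows "f s = f 0"
proof -
  have "((\<lambda>_. 0) has_integral f s - f 0) {0..s}"
    apply (rule fundamental_theorem_of_calculus_interior)
    using assms by (auto intro: continuous_on_subset)
  then have "f s - f 0 = 0" using has_integral_unique[OF _ has_integral_0] by blast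
  then show ?thesis by simp
qed

lemma ftc01:
  fixes f :: "real \<Rightarrow> 'a::banach"
  assumes "continuous_on {0..1} f" "\<And>x. x\<in>{0<..<1} \<Longrightarrow> (f has_vector_derivative g x) (at x)"
    "continuous_on {0..1} g"
  shows "(f has_vector_derivative g 1) (at 1 within {0..1})"
proof -
  have eq: "f s = f 0 + integral {0..s} g" if "s \<in> {0..1}" for s
  proof -
    have "(g has_integral f s - f 0) {0..s}"
      apply (rule fundamental_theorem_of_calculus_interior)
      using assms that by (auto intro: continuous_on_subset)
    then show ?thesis by (simp add: integral_unique)
  qed
  have D: "((\<lambda>s. f 0 + integral {0..s} g) has_vector_derivative g 1) (at 1 within {0..1})"
    using has_vector_derivative_add[OF has_vector_derivative_const integral_has_vector_derivative[OF assms(3), of 1]]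
    by simp
  show ?thesis
    by (rule has_vector_derivative_transform[of 1 "{0..1}" f "\<lambda>s. f 0 + integral {0..s} g", OF _ _ D])
      (simp, erule eq)
qed

lemma interior_vd:
  assumes "x \<in> {0<..<1}" "(f has_vector_derivative d) (at x within {0..1::real})"
  shows "(f has_vector_derivative d) (at x)"
  using assms by (simp add: at_within_Icc_at)

lemma interior_rd:
  assumes "x \<in> {0<..<1}" "(f has_real_derivative d) (at x within {0..1::real})"
  shows "(f has_real_derivative d) (at x)"
  using assms by (simp add: at_within_Icc_at)

lemma vd_const_zero:
  fixes f :: "real \<Rightarrow> 'a::real_normed_vector"
  assumes "\<And>y. y\<in>{0<..<1} \<Longrightarrow> f y = c" "x \<in> {0<..<1}" "(f has_vector_derivative d) (at x)"
  shows "d = 0"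
proof -
  have "((\<lambda>_. c) has_vector_derivative d) (at x)"
    by (rule has_vector_derivative_transform_within_open[OF assms(3) open_greaterThanLessThan assms(2)])
       (use assms(1) in auto)
  moreover have "((\<lambda>_. c) has_vector_derivative 0) (at x)" by (rule has_vector_derivative_const)
  ultimately show ?thesis using vector_derivative_unique_at by blast
qed

lemma perp_perp[simp]: "perp (perp v) = - v" by (simp add: perp_def prod_eq_iff)
lemma perp_minus[simp]: "perp (- v) = - perp v" by (simp add: perp_def)
lemma perp_scaleR[simp]: "perp (c *\<^sub>R v) = c *\<^sub>R perp v" by (simp add: perp_def)
lemma perp_zero[simp]: "perp 0 = 0" by (simp add: perp_def zero_prod_def)
lemma inner_perp_self[simp]: "v \<bullet> perp v = 0" "perp v \<bullet> v = 0"
  by (auto simp: perp_def inner_prod_def)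
lemma inner_perp_perp[simp]: "perp v \<bullet> perp w = v \<bullet> w"
  by (auto simp: perp_def inner_prod_def)
lemma bl_perp: "bounded_linear perp"
  unfolding perp_def by (intro bounded_linear_Pair bounded_linear_minus bounded_linear_fst bounded_linear_snd)
lemma vd_perp: "(f has_vector_derivative f') F \<Longrightarrow> ((\<lambda>x. perp (f x)) has_vector_derivative perp f') F"
  using bounded_linear.has_vector_derivative[OF bl_perp] by blast
lemma cont_perp[continuous_intros]: "continuous_on S f \<Longrightarrow> continuous_on S (\<lambda>x. perp (f x))"
  unfolding perp_def by (intro continuous_intros)
lemma vd_inner: "(f has_vector_derivative f') (at x within s) \<Longrightarrow> (g has_vector_derivative g') (at x within s) \<Longrightarrow>
   ((\<lambda>x. f x \<bullet> g x) has_real_derivative (f x \<bullet> g' + f' \<bullet> g x)) (at x within s)"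
  unfolding has_real_derivative_iff_has_vector_derivative
  using bounded_bilinear.has_vector_derivative[OF bounded_bilinear_inner] by blast



lemma at1_nbot: "at (1::real) within {0..1} \<noteq> bot"
  by (simp add: at_within_Icc_at_left)

lemma cont_at_of_on: "continuous_on {0..1::real} g \<Longrightarrow> x \<in> {0..1} \<Longrightarrow> continuous (at x within {0..1}) g"
  using continuous_on_eq_continuous_within by blast

lemma kprep:
  fixes \<epsilon> \<omega> \<mu> u :: "real \<Rightarrow> real"
  assumes ce: "c2_01 \<epsilon> \<epsilon>1 \<epsilon>2" and cw: "c2_01 \<omega> \<omega>1 \<omega>2" and cm: "c2_01 \<mu> \<mu>1 \<mu>2" and cu: "c2_01 u u1 u2"
    and pos: "\<forall>s\<in>{0..1}. \<mu> s \<ge> 0 \<and> \<epsilon> s > 0"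
    and m1: "\<mu> 1 = 0" and md: "(\<mu> has_real_derivative 0) (at 1 within {0..1})"
  obtains k1 k2 where "c2_01 (\<lambda>s. omega_bar \<epsilon> \<omega> \<mu> s * u s) k1 k2" "k1 1 = 0"
proof -
  have den: "\<And>s. s\<in>{0..1} \<Longrightarrow> \<mu> s + \<epsilon> s \<noteq> 0" using pos by (smt (verit))
  have feq: "(\<lambda>s. omega_bar \<epsilon> \<omega> \<mu> s * u s) = (\<lambda>s. \<mu> s * (\<omega> s * inverse (\<mu> s + \<epsilon> s) * u s))"
    by (simp add: omega_bar_def divide_inverse fun_eq_iff mult_ac)
  note cg = c2_mult[OF c2_mult[OF cw c2_inverse[OF c2_add[OF cm ce] den]] cu]
  note ck = c2_mult[OF cm cg]
  then obtain k1 k2 where ck': "c2_01 (\<lambda>s. \<mu> s * (\<omega> s * inverse (\<mu> s + \<epsilon> s) * u s)) k1 k2" by blast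
  have d1: "((\<lambda>s. \<mu> s * (\<omega> s * inverse (\<mu> s + \<epsilon> s) * u s)) has_vector_derivative k1 1) (at 1 within {0..1})"
  proof -
    have "1 \<in> {0..1::real}" by simp
    then show ?thesis using ck' unfolding c2_01_def has_real_derivative_iff_has_vector_derivative by blast
  qed
  have d0: "((\<lambda>s. \<mu> s *\<^sub>R (\<omega> s * inverse (\<mu> s + \<epsilon> s) * u s)) has_vector_derivative 0) (at 1 within {0..1})"
    using deriv0_mult[OF md m1 cont_at_of_on[OF c2_cont(1)[OF cg], of 1]] by simp
  have "k1 1 = 0" using vector_derivative_unique_within[OF at1_nbot d1] d0 by simp
  then show ?thesis using that ck' feq by simp
qed

lemma kbound:
  fixes m e w uu :: real
  assumes "0 \<le> m" "0 < e" "0 < w" "-1 \<le> uu" "uu \<le> 1"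
  shows "(m * w / (m + e) * uu)^2 < w^2"
proof -
  have a: "\<bar>m * w / (m + e) * uu\<bar> = m * w * \<bar>uu\<bar> / (m + e)"
    using assms by (simp add: abs_mult)
  have "m * w * \<bar>uu\<bar> \<le> m * w" using mult_left_le[of "\<bar>uu\<bar>" "m*w"] assms by simp
  then have "m * w * \<bar>uu\<bar> / (m + e) \<le> m * w / (m + e)" by (rule divide_right_mono) (use assms in simp)
  then have "\<bar>m * w / (m + e) * uu\<bar> \<le> m * w / (m + e)" using a by simp
  also have "\<dots> < w" using assms by (simp add: field_simps)
  finally have "\<bar>m * w / (m + e) * uu\<bar> < \<bar>w\<bar>" using assms by simp
  then have "\<bar>m * w / (m + e) * uu\<bar>^2 < \<bar>w\<bar>^2" by (intro power_strict_mono) auto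
  then show ?thesis by (simp only: power2_abs)
qed



lemma norm_pair_sq: "(norm (a::real, b::real))^2 = a^2 + b^2"
  by (simp add: norm_Pair)

lemma ball4: "(\<forall>j<(4::nat). P j) \<longleftrightarrow> P 0 \<and> P 1 \<and> P 2 \<and> P 3"
  by (auto simp: less_Suc_eq numeral_eq_Suc)

lemma existence:
  fixes \<epsilon> \<nu> \<omega> \<mu> u :: "real \<Rightarrow> real"
  assumes ce: "c2_01 \<epsilon> \<epsilon>1 \<epsilon>2" and cw: "c2_01 \<omega> \<omega>1 \<omega>2" and cm: "c2_01 \<mu> \<mu>1 \<mu>2" and cu: "c2_01 u u1 u2"
    and pos: "\<forall>s\<in>{0..1}. \<omega> s > 0 \<and> \<nu> s \<ge> 0 \<and> \<mu> s \<ge> 0 \<and> \<epsilon> s > 0"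
    and m1: "\<mu> 1 = 0" and md: "(\<mu> has_real_derivative 0) (at 1 within {0..1})"
    and ub: "\<forall>s\<in>{0..1}. u s \<in> {-1..1}"
  shows "stationary_solution \<epsilon> \<nu> \<omega> \<mu> u (q_expl \<epsilon> \<omega> \<mu> u) (sigma_expl \<epsilon> \<omega> \<mu> u)"
proof -
  define k where "k = (\<lambda>s. omega_bar \<epsilon> \<omega> \<mu> s * u s)"
  obtain k1 k2 where ck: "c2_01 k k1 k2" and k11: "k1 1 = 0"
    using kprep[OF ce cw cm cu _ m1 md] pos unfolding k_def by blast
  have kc: "continuous_on {0..1} k" "continuous_on {0..1} k1" "continuous_on {0..1} k2"
    using c2_cont[OF ck] by auto
  have dk: "\<And>x. x\<in>{0..1} \<Longrightarrow> (k has_real_derivative k1 x) (at x within {0..1})"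
   and dk1: "\<And>x. x\<in>{0..1} \<Longrightarrow> (k1 has_real_derivative k2 x) (at x within {0..1})"
    using ck unfolding c2_01_def by auto
  have k1z: "k 1 = 0" by (simp add: k_def omega_bar_def m1)
  define \<theta> where "\<theta> = theta_expl \<epsilon> \<omega> \<mu> u"
  have th_eq: "\<theta> = (\<lambda>s. integral {0..s} k)" by (simp add: \<theta>_def theta_expl_def k_def fun_eq_iff)
  have dth: "\<And>x. x\<in>{0..1} \<Longrightarrow> (\<theta> has_real_derivative k x) (at x within {0..1})"
    unfolding th_eq has_real_derivative_iff_has_vector_derivative by (rule integral_has_vector_derivative[OF kc(1)])
  have thc: "continuous_on {0..1} \<theta>" by (rule rd_cont[OF dth])
  have th0: "\<theta> 0 = 0" by (simp add: th_eq)
  define T where "T = (\<lambda>s. (sin (\<theta> s), - cos (\<theta> s)))"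
  have Tc: "continuous_on {0..1} T" unfolding T_def by (intro continuous_intros thc)
  have q_eq: "q_expl \<epsilon> \<omega> \<mu> u = (\<lambda>s. integral {0..s} T)"
    by (simp add: q_expl_def T_def \<theta>_def fun_eq_iff)
  define Q where "Q = (\<lambda>j::nat. if j = 0 then q_expl \<epsilon> \<omega> \<mu> u else if j = 1 then T
     else if j = 2 then (\<lambda>s. (k s * cos (\<theta> s), k s * sin (\<theta> s)))
     else if j = 3 then (\<lambda>s. (k1 s * cos (\<theta> s) - (k s)^2 * sin (\<theta> s), k1 s * sin (\<theta> s) + (k s)^2 * cos (\<theta> s)))
     else (\<lambda>s. ((k2 s - (k s)^3) * cos (\<theta> s) - 3 * k s * k1 s * sin (\<theta> s),
                (k2 s - (k s)^3) * sin (\<theta> s) + 3 * k s * k1 s * cos (\<theta> s))))"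
  have Q0: "Q 0 = q_expl \<epsilon> \<omega> \<mu> u" and Q1: "Q 1 = T"
    and Q2: "Q 2 = (\<lambda>s. (k s * cos (\<theta> s), k s * sin (\<theta> s)))"
    and Q3: "Q 3 = (\<lambda>s. (k1 s * cos (\<theta> s) - (k s)^2 * sin (\<theta> s), k1 s * sin (\<theta> s) + (k s)^2 * cos (\<theta> s)))"
    and Q4: "Q 4 = (\<lambda>s. ((k2 s - (k s)^3) * cos (\<theta> s) - 3 * k s * k1 s * sin (\<theta> s),
                (k2 s - (k s)^3) * sin (\<theta> s) + 3 * k s * k1 s * cos (\<theta> s)))"
    by (simp_all add: Q_def)
  note Q1' = Q1[unfolded One_nat_def]
  have CQ: "Ck_on01 4 (q_expl \<epsilon> \<omega> \<mu> u) Q"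
    unfolding Ck_on01_def ball4
  proof (intro conjI ballI)
    show "Q 0 = q_expl \<epsilon> \<omega> \<mu> u" by (rule Q0)
  next
    fix x :: real assume x: "x \<in> {0..1}"
    show "(Q 0 has_vector_derivative Q (Suc 0) x) (at x within {0..1})"
      using integral_has_vector_derivative[OF Tc x] by (simp add: Q0 Q1[unfolded One_nat_def] q_eq)
  next
    fix x :: real assume x: "x \<in> {0..1}"
    show "(Q 1 has_vector_derivative Q (Suc 1) x) (at x within {0..1})"
      unfolding Q1 Suc_1 Q2 T_def using dth[OF x]
      by (auto intro!: vd_pair derivative_eq_intros simp: algebra_simps)
  next
    fix x :: real assume x: "x \<in> {0..1}"
    have s2: "Suc 2 = 3" by simp
    show "(Q 2 has_vector_derivative Q (Suc 2) x) (at x within {0..1})"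
      unfolding Q2 s2 Q3 using dth[OF x] dk[OF x]
      by (auto intro!: vd_pair derivative_eq_intros simp: algebra_simps power2_eq_square)
  next
    fix x :: real assume x: "x \<in> {0..1}"
    have s3: "Suc 3 = 4" by simp
    show "(Q 3 has_vector_derivative Q (Suc 3) x) (at x within {0..1})"
      unfolding Q3 s3 Q4 using dth[OF x] dk[OF x] dk1[OF x]
      by (auto intro!: vd_pair derivative_eq_intros simp: algebra_simps power2_eq_square power3_eq_cube)
  next
    show "continuous_on {0..1} (Q 4)" unfolding Q4 by (intro continuous_intros kc thc)
  qed
  have sig_eq: "sigma_expl \<epsilon> \<omega> \<mu> u = (\<lambda>s. \<epsilon> s * (k s)^2)"
    by (simp add: sigma_expl_def k_def fun_eq_iff)
  define S where "S = (\<lambda>j::nat. if j = 0 then sigma_expl \<epsilon> \<omega> \<mu> u else (\<lambda>s. \<epsilon>1 s * (k s)^2 + \<epsilon> s * (2 * k s * k1 s)))"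
  have CS: "Ck_on01 1 (sigma_expl \<epsilon> \<omega> \<mu> u) S"
    unfolding Ck_on01_def
  proof (intro conjI allI impI ballI)
    show "S 0 = sigma_expl \<epsilon> \<omega> \<mu> u" by (simp add: S_def)
  next
    fix j x assume "j < (1::nat)" and x: "(x::real) \<in> {0..1}"
    then have j: "j = 0" by simp
    have de: "(\<epsilon> has_real_derivative \<epsilon>1 x) (at x within {0..1})" using ce x unfolding c2_01_def by auto
    show "(S j has_vector_derivative S (Suc j) x) (at x within {0..1})"
      unfolding j S_def sig_eq using de dk[OF x]
      by (auto simp: has_real_derivative_iff_has_vector_derivative[symmetric] algebra_simps power2_eq_square
          intro!: derivative_eq_intros)
  next
    have "continuous_on {0..1} \<epsilon>" "continuous_on {0..1} \<epsilon>1" using c2_cont[OF ce] by auto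
    then show "continuous_on {0..1} (S 1)" unfolding S_def by (simp, intro continuous_intros kc)
  qed
  have key: "\<mu> s * (\<omega> s * u s - k s) = \<epsilon> s * k s" if "s \<in> {0..1}" for s
  proof -
    have "\<mu> s + \<epsilon> s > 0" using pos that by (smt (verit))
    then show ?thesis by (simp add: k_def omega_bar_def field_simps)
  qed
  have kb: "(k s)^2 < (\<omega> s)^2" if "s \<in> {0..1}" for s
    using kbound[of "\<mu> s" "\<epsilon> s" "\<omega> s" "u s"] pos ub that by (simp add: k_def omega_bar_def)
  have nQ1: "(norm (Q 1 s))^2 = 1" for s by (simp add: Q1 Q1' T_def norm_pair_sq)
  have crs: "cross (Q 1 s) (Q 2 s) = k s" for s
  proof -
    have "cross (Q 1 s) (Q 2 s) = sin (\<theta> s) * (k s * sin (\<theta> s)) + - cos (\<theta> s) * - (k s * cos (\<theta> s))"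
      by (simp add: Q1 Q1' Q2 T_def cross_def perp_def inner_prod_def)
    also have "\<dots> = k s * ((sin (\<theta> s))^2 + (cos (\<theta> s))^2)"
      by (simp only: distrib_left power2_eq_square mult_minus_left mult_minus_right minus_minus mult.left_commute)
    also have "\<dots> = k s" by simp
    finally show ?thesis .
  qed
  have Gs: "\<epsilon> s + \<nu> s * pos_part ((norm (Q 2 s))\<^sup>2 - (\<omega> s)\<^sup>2) = \<epsilon> s" if "s \<in> {0..1}" for s
  proof -
    have "(norm (Q 2 s))\<^sup>2 = (k s)^2"
    proof -
      have "(norm (Q 2 s))\<^sup>2 = (k s * cos (\<theta> s))^2 + (k s * sin (\<theta> s))^2"
        by (simp add: Q2 norm_pair_sq)
      also have "\<dots> = (k s)^2 * ((sin (\<theta> s))^2 + (cos (\<theta> s))^2)"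
        by (simp only: power_mult_distrib distrib_left add.commute)
      also have "\<dots> = (k s)^2" by simp
      finally show ?thesis .
    qed
    then show ?thesis using kb[OF that] by (simp add: pos_part_def)
  qed
  have Hs: "\<mu> s * (\<omega> s * u s - cross (Q 1 s) (Q 2 s)) = \<epsilon> s * k s" if "s \<in> {0..1}" for s
    unfolding crs by (rule key[OF that])
  have Az: "sigma_expl \<epsilon> \<omega> \<mu> u s *\<^sub>R Q 1 s - (\<mu> s * (\<omega> s * u s - cross (Q 1 s) (Q 2 s))) *\<^sub>R perp (Q 2 s) = 0"
    if "s \<in> {0..1}" for s
    unfolding Hs[OF that] sig_eq by (simp add: Q1 Q1' Q2 T_def perp_def power2_eq_square zero_prod_def)
  have Bz: "(\<epsilon> s + \<nu> s * pos_part ((norm (Q 2 s))\<^sup>2 - (\<omega> s)\<^sup>2)) *\<^sub>R Q 2 s + (\<mu> s * (\<omega> s * u s - cross (Q 1 s) (Q 2 s))) *\<^sub>R perp (Q 1 s) = 0"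
    if "s \<in> {0..1}" for s
    unfolding Hs[OF that] Gs[OF that] by (simp add: Q1 Q1' Q2 T_def perp_def zero_prod_def)
  have z0: "((\<lambda>y. F y) has_vector_derivative 0) (at x)" if "\<And>y. y \<in> {0..1} \<Longrightarrow> F y = 0" "x \<in> {0<..<1}"
    for F :: "real \<Rightarrow> real \<times> real" and x
    by (rule has_vector_derivative_transform_within_open[OF has_vector_derivative_const open_greaterThanLessThan that(2)])
       (use that(1) in auto)
  show ?thesis
    unfolding stationary_solution_def Let_def
  proof (rule exI[of _ Q], rule exI[of _ S], intro conjI)
    show "Ck_on01 4 (q_expl \<epsilon> \<omega> \<mu> u) Q" by (rule CQ)
    show "Ck_on01 1 (sigma_expl \<epsilon> \<omega> \<mu> u) S" by (rule CS)
    show "\<exists>A' B' B''. \<forall>x\<in>{0<..<1}.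
        ((\<lambda>s. sigma_expl \<epsilon> \<omega> \<mu> u s *\<^sub>R Q 1 s - (\<mu> s * (\<omega> s * u s - cross (Q 1 s) (Q 2 s))) *\<^sub>R perp (Q 2 s)) has_vector_derivative A' x) (at x) \<and>
        ((\<lambda>s. (\<epsilon> s + \<nu> s * pos_part ((norm (Q 2 s))\<^sup>2 - (\<omega> s)\<^sup>2)) *\<^sub>R Q 2 s + (\<mu> s * (\<omega> s * u s - cross (Q 1 s) (Q 2 s))) *\<^sub>R perp (Q 1 s)) has_vector_derivative B' x) (at x) \<and>
        (B' has_vector_derivative B'' x) (at x) \<and> A' x - B'' x = 0"
      apply (rule exI[of _ "\<lambda>_. 0"], rule exI[of _ "\<lambda>_. 0"], rule exI[of _ "\<lambda>_. 0"])
      apply (intro ballI conjI)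
      subgoal for x apply (rule z0) apply (rule Az) apply assumption apply assumption done
      subgoal for x apply (rule z0) apply (rule Bz) apply assumption apply assumption done
      subgoal by (rule has_vector_derivative_const)
      subgoal by simp
      done
    show "\<forall>s\<in>{0<..<1}. (norm (Q 1 s))\<^sup>2 = 1" using nQ1 by simp
    show "q_expl \<epsilon> \<omega> \<mu> u 0 = 0" by (simp add: q_eq)
    show "Q 1 0 = - e2" by (simp add: Q1 Q1' T_def th0 e2_def)
    show "Q 2 1 = 0" by (simp add: Q2 k1z zero_prod_def)
    show "Q 3 1 = 0" by (simp add: Q3 k1z k11 zero_prod_def)
    show "sigma_expl \<epsilon> \<omega> \<mu> u 1 = 0" by (simp add: sig_eq k1z)
  qed
qed



lemma deriv0_mult2:
  fixes k :: "real \<Rightarrow> 'a::real_normed_vector"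
  assumes "(k has_vector_derivative 0) (at x within S)" "k x = 0" "continuous (at x within S) g"
  shows "((\<lambda>y. g y *\<^sub>R k y) has_vector_derivative 0) (at x within S)"
proof -
  have kk: "((\<lambda>y. (1 / norm(y - x)) *\<^sub>R (k y - (k x + (y - x) *\<^sub>R 0))) \<longlongrightarrow> 0) (at x within S)"
    using assms(1) unfolding has_vector_derivative_def has_derivative_within by simp
  have gg: "(g \<longlongrightarrow> g x) (at x within S)" using assms(3) by (simp add: continuous_within)
  have "((\<lambda>y. g y *\<^sub>R ((1 / norm(y - x)) *\<^sub>R (k y - (k x + (y - x) *\<^sub>R 0)))) \<longlongrightarrow> g x *\<^sub>R 0) (at x within S)"
    by (intro tendsto_scaleR kk gg)
  moreover have eq: "\<And>y. g y *\<^sub>R ((1 / norm(y - x)) *\<^sub>R (k y - (k x + (y - x) *\<^sub>R 0))) =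
     (1 / norm(y - x)) *\<^sub>R (g y *\<^sub>R k y - (g x *\<^sub>R k x + (y - x) *\<^sub>R 0))"
    using assms(2) by simp
  ultimately have "((\<lambda>y. (1 / norm(y - x)) *\<^sub>R (g y *\<^sub>R k y - (g x *\<^sub>R k x + (y - x) *\<^sub>R 0))) \<longlongrightarrow> 0) (at x within S)"
    by (simp only: eq scaleR_zero_right)
  then show ?thesis unfolding has_vector_derivative_def has_derivative_within
    by (blast intro: bounded_linear_scaleR_left)
qed

lemma decomp:
  fixes t v :: "real \<times> real"
  assumes "t \<bullet> t = 1" "t \<bullet> v = 0"
  shows "v = cross t v *\<^sub>R (- perp t)"
proof -
  obtain a b where t: "t = (a, b)" by (cases t)
  obtain c d where v: "v = (c, d)" by (cases v)
  have h1: "a * a + b * b = 1" and h2: "a * c + b * d = 0"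
    using assms by (auto simp: t v inner_prod_def)
  have "c = - (b * (a * d - b * c))" using h1 h2 by algebra
  moreover have "d = a * (a * d - b * c)" using h1 h2 by algebra
  ultimately show ?thesis
    by (simp add: t v cross_def perp_def inner_prod_def algebra_simps)
qed

lemma kappa_unique:
  fixes e n m w uu x :: real
  assumes "0 < e" "0 \<le> n" "0 \<le> m" "0 < w" "-1 \<le> uu" "uu \<le> 1"
    and eq: "(e + n * pos_part (x^2 - w^2)) * x = m * (w * uu - x)"
  shows "x = m * w / (m + e) * uu"
proof (cases "x^2 \<le> w^2")
  case True
  then have "pos_part (x^2 - w^2) = 0" by (simp add: pos_part_def)
  then have "x * (m + e) = m * w * uu" using eq by (simp add: algebra_simps)
  then show ?thesis using assms by (simp add: field_simps)
next
  case False
  then have p: "pos_part (x^2 - w^2) = x^2 - w^2" "x^2 - w^2 > 0" by (auto simp: pos_part_def)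
  have ax: "\<bar>x\<bar> > w" using False assms(4)
    by (metis abs_le_square_iff abs_of_pos not_le order.strict_iff_not power2_abs)
  have "\<bar>x\<bar> * (e + m + n * (x^2 - w^2)) = \<bar>m * w * uu\<bar>"
  proof -
    have "x * (e + m + n * (x^2 - w^2)) = m * w * uu" using eq p by (simp add: algebra_simps)
    then have "\<bar>x * (e + m + n * (x^2 - w^2))\<bar> = \<bar>m * w * uu\<bar>" by simp
    moreover have "e + m + n * (x^2 - w^2) \<ge> 0" using assms p by simp
    ultimately show ?thesis by (simp add: abs_mult)
  qed
  moreover have "\<bar>m * w * uu\<bar> \<le> m * w" using assms by (simp add: abs_mult mult_left_le)
  moreover have "\<bar>x\<bar> * (e + m + n * (x^2 - w^2)) \<ge> \<bar>x\<bar> * (e + m)"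
    using assms p by (simp add: mult_left_mono)
  moreover have "\<bar>x\<bar> * (e + m) > w * (e + m)" using ax assms by (simp add: mult_strict_right_mono)
  moreover have "w * (e + m) > m * w" using assms by (simp add: algebra_simps)
  ultimately show ?thesis by linarith
qed



lemma uniqueness:
  fixes \<epsilon> \<nu> \<omega> \<mu> u q \<sigma> :: "real \<Rightarrow> _"
  assumes ce: "c2_01 \<epsilon> \<epsilon>1 \<epsilon>2" and cw: "c2_01 \<omega> \<omega>1 \<omega>2" and cm: "c2_01 \<mu> \<mu>1 \<mu>2" and cu: "c2_01 u u1 u2"
    and cn: "c2_01 \<nu> \<nu>1 \<nu>2"
    and pos: "\<forall>s\<in>{0..1}. \<omega> s > 0 \<and> \<nu> s \<ge> 0 \<and> \<mu> s \<ge> 0 \<and> \<epsilon> s > 0"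
    and m1: "\<mu> 1 = 0" and md: "(\<mu> has_real_derivative 0) (at 1 within {0..1})"
    and ub: "\<forall>s\<in>{0..1}. u s \<in> {-1..1}"
    and sol: "stationary_solution \<epsilon> \<nu> \<omega> \<mu> u q \<sigma>"
  shows "\<forall>s\<in>{0..1}. q s = q_expl \<epsilon> \<omega> \<mu> u s \<and> \<sigma> s = sigma_expl \<epsilon> \<omega> \<mu> u s"
proof -
  obtain Q S where CQ: "Ck_on01 4 q Q" and CS: "Ck_on01 1 \<sigma> S"
    and eqn: "let G = (\<lambda>s. \<epsilon> s + \<nu> s * pos_part ((norm (Q 2 s))\<^sup>2 - (\<omega> s)\<^sup>2));
           H = (\<lambda>s. \<mu> s * (\<omega> s * u s - cross (Q 1 s) (Q 2 s)));
           A = (\<lambda>s. \<sigma> s *\<^sub>R Q 1 s - H s *\<^sub>R perp (Q 2 s));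
           B = (\<lambda>s. G s *\<^sub>R Q 2 s + H s *\<^sub>R perp (Q 1 s))
       in \<exists>A' B' B''. \<forall>x\<in>{0<..<1}.
            (A has_vector_derivative A' x) (at x) \<and>
            (B has_vector_derivative B' x) (at x) \<and>
            (B' has_vector_derivative B'' x) (at x) \<and>
            A' x - B'' x = 0"
    and nrm: "\<forall>s\<in>{0<..<1}. (norm (Q 1 s))\<^sup>2 = 1"
    and q0: "q 0 = 0" and Q10: "Q 1 0 = - e2" and Q21: "Q 2 1 = 0" and Q31: "Q 3 1 = 0" and s1: "\<sigma> 1 = 0"
    using sol unfolding stationary_solution_def by blast
  define P1 where "P1 = Q 1"
  define P2 where "P2 = Q 2"
  define P3 where "P3 = Q 3"
  define G where "G = (\<lambda>s. \<epsilon> s + \<nu> s * pos_part ((norm (P2 s))\<^sup>2 - (\<omega> s)\<^sup>2))"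
  define H where "H = (\<lambda>s. \<mu> s * (\<omega> s * u s - cross (P1 s) (P2 s)))"
  define A where "A = (\<lambda>s. \<sigma> s *\<^sub>R P1 s - H s *\<^sub>R perp (P2 s))"
  define B where "B = (\<lambda>s. G s *\<^sub>R P2 s + H s *\<^sub>R perp (P1 s))"
  obtain A' B' B'' where dAB: "\<And>x. x\<in>{0<..<1} \<Longrightarrow>
            (A has_vector_derivative A' x) (at x) \<and>
            (B has_vector_derivative B' x) (at x) \<and>
            (B' has_vector_derivative B'' x) (at x) \<and>
            A' x - B'' x = 0"
    using eqn unfolding Let_def A_def B_def G_def H_def P1_def P2_def by blast
  have dQ: "\<And>j x. j < 4 \<Longrightarrow> x\<in>{0..1} \<Longrightarrow> (Q j has_vector_derivative Q (Suc j) x) (at x within {0..1})"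
    and Q0: "Q 0 = q" and cQ4: "continuous_on {0..1} (Q 4)"
    using CQ unfolding Ck_on01_def by auto
  have dq: "\<And>x. x\<in>{0..1} \<Longrightarrow> (q has_vector_derivative P1 x) (at x within {0..1})"
    using dQ[of 0] Q0 by (simp add: P1_def)
  have dP1: "\<And>x. x\<in>{0..1} \<Longrightarrow> (P1 has_vector_derivative P2 x) (at x within {0..1})"
    using dQ[of 1] by (simp add: P1_def P2_def numeral_eq_Suc)
  have dP2: "\<And>x. x\<in>{0..1} \<Longrightarrow> (P2 has_vector_derivative P3 x) (at x within {0..1})"
    using dQ[of 2] by (simp add: P3_def P2_def numeral_eq_Suc)
  have dP3: "\<And>x. x\<in>{0..1} \<Longrightarrow> (P3 has_vector_derivative Q 4 x) (at x within {0..1})"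
    using dQ[of 3] by (simp add: P3_def numeral_eq_Suc)
  have cP1: "continuous_on {0..1} P1" by (rule vd_cont[OF dP1])
  have cP2: "continuous_on {0..1} P2" by (rule vd_cont[OF dP2])
  have cP3: "continuous_on {0..1} P3" by (rule vd_cont[OF dP3])
  have dsig: "\<And>x. x\<in>{0..1} \<Longrightarrow> (\<sigma> has_vector_derivative S 1 x) (at x within {0..1})"
    using CS unfolding Ck_on01_def by auto
  have csig: "continuous_on {0..1} \<sigma>" by (rule vd_cont[OF dsig])
  have iP1: "(P1 has_vector_derivative P2 x) (at x)" if x: "x\<in>{0<..<1}" for x
    using x by (intro interior_vd[OF x] dP1) auto
  have iP2: "(P2 has_vector_derivative P3 x) (at x)" if x: "x\<in>{0<..<1}" for x
    using x by (intro interior_vd[OF x] dP2) auto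
  have cfun: "continuous_on {0..1} \<epsilon>" "continuous_on {0..1} \<omega>" "continuous_on {0..1} \<mu>"
    "continuous_on {0..1} u" "continuous_on {0..1} \<nu>"
    using c2_cont ce cw cm cu cn by blast+
  have cH: "continuous_on {0..1} H" unfolding H_def cross_def by (intro continuous_intros cfun cP1 cP2)
  have cG: "continuous_on {0..1} G" unfolding G_def pos_part_def by (intro continuous_intros cfun cP2)
  have cA: "continuous_on {0..1} A" unfolding A_def by (intro continuous_intros csig cH cP1 cP2)
  have cB: "continuous_on {0..1} B" unfolding B_def by (intro continuous_intros cG cH cP1 cP2)
  define \<kappa> where "\<kappa> = (\<lambda>s. cross (P1 s) (P2 s))"
  define m where "m = (\<lambda>s. - perp (P1 s))"
  have tt: "P1 s \<bullet> P1 s = 1" if "s \<in> {0<..<1}" for s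
    using nrm that by (simp add: P1_def power2_norm_eq_inner)
  have tQ2: "P1 s \<bullet> P2 s = 0" if s: "s \<in> {0<..<1}" for s
  proof -
    have "((\<lambda>s. P1 s \<bullet> P1 s) has_real_derivative (P1 s \<bullet> P2 s + P2 s \<bullet> P1 s)) (at s)"
      using vd_inner[OF iP1[OF s] iP1[OF s]] by simp
    then have "(P1 s \<bullet> P2 s + P2 s \<bullet> P1 s) = 0"
      unfolding has_real_derivative_iff_has_vector_derivative
      using vd_const_zero[of "\<lambda>s. P1 s \<bullet> P1 s" 1 s "P1 s \<bullet> P2 s + P2 s \<bullet> P1 s"] tt s by blast
    then show ?thesis by (simp add: inner_commute)
  qed
  have P2d: "P2 s = \<kappa> s *\<^sub>R m s" if s: "s \<in> {0<..<1}" for s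
    using decomp[OF tt[OF s] tQ2[OF s]] by (simp add: \<kappa>_def m_def)
  have mm: "m s \<bullet> m s = 1" if s: "s \<in> {0<..<1}" for s
    using tt[OF s] by (simp add: m_def)
  have tm: "P1 s \<bullet> m s = 0" "m s \<bullet> P1 s = 0" for s by (simp_all add: m_def)
  have nP2: "(norm (P2 s))\<^sup>2 = (\<kappa> s)^2" if s: "s \<in> {0<..<1}" for s
  proof -
    have "norm (m s) = 1" using mm[OF s] by (simp add: norm_eq_sqrt_inner)
    then show ?thesis by (simp add: P2d[OF s] power_mult_distrib)
  qed
  have Ad: "A s = (\<sigma> s - H s * \<kappa> s) *\<^sub>R P1 s" if s: "s \<in> {0<..<1}" for s
    by (simp add: A_def P2d[OF s] m_def algebra_simps)
  have Bd: "B s = (G s * \<kappa> s - H s) *\<^sub>R m s" if s: "s \<in> {0<..<1}" for s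
    by (simp add: B_def P2d[OF s] m_def algebra_simps)
  obtain c where cc: "\<And>x. x \<in> {0<..<1} \<Longrightarrow> A x - B' x = c"
  proof -
    have "\<exists>c. \<forall>x\<in>{0<..<1}. A x - B' x = c"
    proof (rule has_derivative_zero_constant)
      fix x assume x: "x \<in> {0<..<1::real}"
      have "((\<lambda>x. A x - B' x) has_vector_derivative A' x - B'' x) (at x)"
        using dAB[OF x] by (intro has_vector_derivative_diff) auto
      then have "((\<lambda>x. A x - B' x) has_vector_derivative 0) (at x within {0<..<1})"
        using dAB[OF x] has_vector_derivative_at_within by fastforce
      then show "((\<lambda>x. A x - B' x) has_derivative (\<lambda>h. 0)) (at x within {0<..<1})"
        unfolding has_vector_derivative_def by simp
    qed simp
    then show ?thesis using that by blast
  qed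
  \<comment> \<open>Step 2, 3: boundary at 1 forces c = 0\<close>
  have H1: "H 1 = 0" by (simp add: H_def m1)
  have B1: "B 1 = 0" by (simp add: B_def H1 P2_def Q21)
  have dB1: "(B has_vector_derivative A 1 - c) (at 1 within {0..1})"
  proof (rule ftc01[OF cB _ _])
    fix x assume x: "x \<in> {0<..<1::real}"
    show "(B has_vector_derivative A x - c) (at x)" using dAB[OF x] cc[OF x]
      by (metis add_diff_cancel_left' diff_add_cancel)
  next
    show "continuous_on {0..1} (\<lambda>x. A x - c)" by (intro continuous_intros cA)
  qed
  have one: "(1::real) \<in> {0..1}" by simp
  have dB0: "(B has_vector_derivative 0) (at 1 within {0..1})"
  proof -
    have h0: "((\<lambda>s. \<mu> s *\<^sub>R (\<omega> s * u s - cross (P1 s) (P2 s))) has_vector_derivative 0) (at 1 within {0..1})"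
      apply (rule deriv0_mult[OF md m1])
      apply (rule cont_at_of_on[OF _ one])
      unfolding cross_def by (intro continuous_intros cfun cP1 cP2)
    then have hH: "(H has_vector_derivative 0) (at 1 within {0..1})" by (simp add: H_def)
    have t1: "((\<lambda>s. G s *\<^sub>R P2 s) has_vector_derivative 0) (at 1 within {0..1})"
      apply (rule deriv0_mult2)
      using dP2[OF one] Q31 apply (simp add: P3_def)
      using Q21 apply (simp add: P2_def)
      by (rule cont_at_of_on[OF cG one])
    have t2: "((\<lambda>s. H s *\<^sub>R perp (P1 s)) has_vector_derivative 0) (at 1 within {0..1})"
      apply (rule deriv0_mult[of H, OF _ H1])
      using hH apply (simp add: has_real_derivative_iff_has_vector_derivative)
      by (rule cont_at_of_on[OF _ one]) (intro continuous_intros cP1)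
    show ?thesis using has_vector_derivative_add[OF t1 t2] by (simp add: B_def)
  qed
  have A1: "A 1 = 0" by (simp add: A_def s1 H1 P2_def Q21)
  have c0: "c = 0" using vector_derivative_unique_within[OF at1_nbot dB1 dB0] A1 by simp
  have BA: "B' x = A x" if x: "x \<in> {0<..<1}" for x using cc[OF x] c0 by simp
  define f where "f = (\<lambda>s. B s \<bullet> m s)"
  have dm: "(m has_vector_derivative - perp (P2 x)) (at x)" if x: "x \<in> {0<..<1}" for x
    unfolding m_def by (intro has_vector_derivative_minus vd_perp iP1[OF x])
  have cm': "continuous_on {0..1} m" unfolding m_def by (intro continuous_intros cP1)
  have cf: "continuous_on {0..1} f" unfolding f_def by (intro continuous_intros cB cm')
  have df: "(f has_vector_derivative 0) (at x)" if x: "x \<in> {0<..<1}" for x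
  proof -
    have "(f has_real_derivative (B x \<bullet> - perp (P2 x) + B' x \<bullet> m x)) (at x)"
      unfolding f_def using vd_inner[of B "B' x" x UNIV m "- perp (P2 x)"] dm[OF x] dAB[OF x] by simp
    moreover have "B x \<bullet> - perp (P2 x) + B' x \<bullet> m x = 0"
      using BA[OF x] Ad[OF x] Bd[OF x] P2d[OF x] tm[of x]
      by (simp add: m_def inner_commute)
    ultimately show ?thesis by (simp add: has_real_derivative_iff_has_vector_derivative)
  qed
  have f1: "f 1 = 0" by (simp add: f_def B1)
  have fz: "f s = 0" if "s \<in> {0..1}" for s
    using const01[OF cf df that] const01[OF cf df one] f1 by simp
  have GH: "G s * \<kappa> s - H s = 0" if s: "s \<in> {0<..<1}" for s
    using fz[of s] s mm[OF s] by (simp add: f_def Bd[OF s])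
  have Bz: "B s = 0" if s: "s \<in> {0<..<1}" for s using GH[OF s] by (simp add: Bd[OF s])
  have Az: "A x = 0" if x: "x \<in> {0<..<1}" for x
  proof -
    have "B' x = 0" using vd_const_zero[of B 0 x "B' x"] Bz x dAB[OF x] by blast
    then show ?thesis using BA[OF x] by simp
  qed
  have sH: "\<sigma> s = H s * \<kappa> s" if s: "s \<in> {0<..<1}" for s
  proof -
    have "(\<sigma> s - H s * \<kappa> s) *\<^sub>R P1 s = 0" using Az[OF s] Ad[OF s] by simp
    moreover have "P1 s \<noteq> 0" using tt[OF s] by auto
    ultimately show ?thesis by simp
  qed
  define k where "k = (\<lambda>s. omega_bar \<epsilon> \<omega> \<mu> s * u s)"
  obtain k1 k2 where ck: "c2_01 k k1 k2"
    using kprep[OF ce cw cm cu _ m1 md] pos unfolding k_def by blast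
  have kc: "continuous_on {0..1} k" using c2_cont[OF ck] by auto
  have kap: "\<kappa> s = k s" if s: "s \<in> {0<..<1}" for s
  proof -
    have s': "s \<in> {0..1}" using s by auto
    have "(\<epsilon> s + \<nu> s * pos_part ((\<kappa> s)^2 - (\<omega> s)^2)) * \<kappa> s = \<mu> s * (\<omega> s * u s - \<kappa> s)"
      using GH[OF s] nP2[OF s] by (simp add: G_def H_def \<kappa>_def)
    then have "\<kappa> s = \<mu> s * \<omega> s / (\<mu> s + \<epsilon> s) * u s"
      using pos ub s' by (intro kappa_unique) auto
    then show ?thesis by (simp add: k_def omega_bar_def)
  qed
  have kb: "(k s)^2 < (\<omega> s)^2" if "s \<in> {0..1}" for s
    using kbound[of "\<mu> s" "\<epsilon> s" "\<omega> s" "u s"] pos ub that by (simp add: k_def omega_bar_def)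
  have sig_eq: "sigma_expl \<epsilon> \<omega> \<mu> u = (\<lambda>s. \<epsilon> s * (k s)^2)"
    by (simp add: sigma_expl_def k_def fun_eq_iff)
  have sigi: "\<sigma> s - sigma_expl \<epsilon> \<omega> \<mu> u s = 0" if s: "s \<in> {0<..<1}" for s
  proof -
    have s': "s \<in> {0..1}" using s by auto
    have "G s = \<epsilon> s" using kb[OF s'] by (simp add: G_def nP2[OF s] kap[OF s] pos_part_def)
    then have "H s = \<epsilon> s * k s" using GH[OF s] kap[OF s] by simp
    then show ?thesis using sH[OF s] kap[OF s] by (simp add: sig_eq power2_eq_square)
  qed
  have sigall: "\<sigma> s = sigma_expl \<epsilon> \<omega> \<mu> u s" if "s \<in> {0..1}" for s
  proof -
    have "continuous_on (closure {0<..<1}) (\<lambda>s. \<sigma> s - sigma_expl \<epsilon> \<omega> \<mu> u s)"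
      unfolding sig_eq by (simp, intro continuous_intros csig cfun kc)
    then have "\<sigma> s - sigma_expl \<epsilon> \<omega> \<mu> u s = 0"
      by (rule continuous_constant_on_closure) (use sigi that in auto)
    then show ?thesis by simp
  qed
  define \<theta> where "\<theta> = theta_expl \<epsilon> \<omega> \<mu> u"
  have th_eq: "\<theta> = (\<lambda>s. integral {0..s} k)" by (simp add: \<theta>_def theta_expl_def k_def fun_eq_iff)
  have dth: "\<And>x. x\<in>{0..1} \<Longrightarrow> (\<theta> has_real_derivative k x) (at x within {0..1})"
    unfolding th_eq has_real_derivative_iff_has_vector_derivative by (rule integral_has_vector_derivative[OF kc])
  have thc: "continuous_on {0..1} \<theta>" by (rule rd_cont[OF dth])
  have th0: "\<theta> 0 = 0" by (simp add: th_eq)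
  define T where "T = (\<lambda>s. (sin (\<theta> s), - cos (\<theta> s)))"
  have Tc: "continuous_on {0..1} T" unfolding T_def by (intro continuous_intros thc)
  define D where "D = (\<lambda>s. P1 s - T s)"
  have cD: "continuous_on {0..1} (\<lambda>s. D s \<bullet> D s)" unfolding D_def by (intro continuous_intros cP1 Tc)
  have dD: "((\<lambda>s. D s \<bullet> D s) has_vector_derivative 0) (at x)" if x: "x \<in> {0<..<1}" for x
  proof -
    have dT: "(T has_vector_derivative (k x * cos (\<theta> x), k x * sin (\<theta> x))) (at x)"
      unfolding T_def using interior_rd[OF x dth] x
      by (auto intro!: vd_pair[where s=UNIV] derivative_eq_intros simp: algebra_simps)
    have "(D has_vector_derivative P2 x - (k x * cos (\<theta> x), k x * sin (\<theta> x))) (at x)"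
      unfolding D_def by (intro has_vector_derivative_diff iP1[OF x] dT)
    moreover have "P2 x - (k x * cos (\<theta> x), k x * sin (\<theta> x)) = - k x *\<^sub>R perp (D x)"
      by (simp add: P2d[OF x] kap[OF x] m_def D_def T_def perp_def algebra_simps)
    ultimately have "(D has_vector_derivative - k x *\<^sub>R perp (D x)) (at x)" by simp
    from vd_inner[OF this this] show ?thesis
      by (simp add: has_real_derivative_iff_has_vector_derivative)
  qed
  have D0: "D 0 = 0" using Q10 by (simp add: D_def P1_def T_def th0 e2_def)
  have Tall: "P1 s = T s" if "s \<in> {0..1}" for s
  proof -
    have "D s \<bullet> D s = D 0 \<bullet> D 0" by (rule const01[OF cD dD that])
    then have "D s = 0" using D0 by simp
    then show ?thesis by (simp add: D_def)
  qed
  have qall: "q s = q_expl \<epsilon> \<omega> \<mu> u s" if s: "s \<in> {0..1}" for s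
  proof -
    have "(P1 has_integral q s - q 0) {0..s}"
      apply (rule fundamental_theorem_of_calculus)
      using s apply simp
      apply (rule has_vector_derivative_within_subset[OF dq])
      using s by auto
    then have "integral {0..s} P1 = q s" using q0 by (simp add: integral_unique)
    moreover have "integral {0..s} P1 = integral {0..s} T"
      by (rule integral_cong) (use s Tall in auto)
    moreover have "q_expl \<epsilon> \<omega> \<mu> u s = integral {0..s} T"
      by (simp add: q_expl_def T_def \<theta>_def)
    ultimately show ?thesis by simp
  qed
  show ?thesis using qall sigall by blast
qed


theorem proposition1:
  fixes \<rho> \<epsilon> \<nu> \<omega> \<mu> u :: "real \<Rightarrow> real"
  assumes "smooth01 \<rho>" and "smooth01 \<epsilon>" and "smooth01 \<nu>" and "smooth01 \<omega>" and "smooth01 \<mu>"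
    and "\<forall>s\<in>{0..1}. \<rho> s > 0 \<and> \<omega> s > 0 \<and> \<nu> s \<ge> 0 \<and> \<mu> s \<ge> 0 \<and> \<epsilon> s > 0"
    and "\<mu> 1 = 0" and "(\<mu> has_real_derivative 0) (at 1 within {0..1})"
    and "\<exists>D. Ck_on01 2 u D"
    and "\<forall>s\<in>{0..1}. u s \<in> {-1..1}"
  shows "stationary_solution \<epsilon> \<nu> \<omega> \<mu> u (q_expl \<epsilon> \<omega> \<mu> u) (sigma_expl \<epsilon> \<omega> \<mu> u) \<and>
         (\<forall>q \<sigma>. stationary_solution \<epsilon> \<nu> \<omega> \<mu> u q \<sigma> \<longrightarrow>
            (\<forall>s\<in>{0..1}. q s = q_expl \<epsilon> \<omega> \<mu> u s \<and> \<sigma> s = sigma_expl \<epsilon> \<omega> \<mu> u s))"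
proof -
  obtain e1 e2' where ce: "c2_01 \<epsilon> e1 e2'" using c2_smooth[OF assms(2)] by blast
  obtain n1 n2 where cn: "c2_01 \<nu> n1 n2" using c2_smooth[OF assms(3)] by blast
  obtain w1 w2 where cw: "c2_01 \<omega> w1 w2" using c2_smooth[OF assms(4)] by blast
  obtain m1 m2 where cm: "c2_01 \<mu> m1 m2" using c2_smooth[OF assms(5)] by blast
  obtain D where "Ck_on01 2 u D" using assms(9) by blast
  then have cu: "c2_01 u (D 1) (D 2)" by (rule c2_Ck)
  have pos: "\<forall>s\<in>{0..1}. \<omega> s > 0 \<and> \<nu> s \<ge> 0 \<and> \<mu> s \<ge> 0 \<and> \<epsilon> s > 0" using assms(6) by blast
  show ?thesis
  proof (intro conjI allI impI)
    show "stationary_solution \<epsilon> \<nu> \<omega> \<mu> u (q_expl \<epsilon> \<omega> \<mu> u) (sigma_expl \<epsilon> \<omega> \<mu> u)"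
      by (rule existence[OF ce cw cm cu pos assms(7) assms(8) assms(10)])
  next
    fix q \<sigma> assume "stationary_solution \<epsilon> \<nu> \<omega> \<mu> u q \<sigma>"
    then show "\<forall>s\<in>{0..1}. q s = q_expl \<epsilon> \<omega> \<mu> u s \<and> \<sigma> s = sigma_expl \<epsilon> \<omega> \<mu> u s"
      by (rule uniqueness[OF ce cw cm cu cn pos assms(7) assms(8) assms(10)])
  qed
qed

end
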